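(* Let $\Lambda$ be a row-finite $k$-graph with no sources, $R$ a commutative ring with $1$, and $m\in\mathbb{N}^k$. Then the family $\{s_\alpha s_{\beta^*}: \alpha,\beta\in\Lambda,\ s(\alpha)=s(\beta),\ d(\beta)=m\}$ (indexed by the pairs $(\alpha,\beta)$) is linearly independent over $R$ in $\mathrm{KP}_R(\Lambda)$. (In particular, for $m=0$, $\{s_\alpha:\alpha\in\Lambda\}$ is linearly independent.)
   Context: A $k$-graph is a countable category $\Lambda$ with a functor $d:\Lambda\to\mathbb{N}^k$ ($\mathbb{N}^k$ a one-object category under addition) with unique factorization: whenever $d(\lambda)=m+n$ there are unique $\mu,\nu$ with $d(\mu)=m,d(\nu)=n,\lambda=\mu\nu$. $\Lambda^0$ = vertices (degree-$0$ morphisms), $\Lambda^n=d^{-1}(n)$, $r,s$ range and source, $\lambda\mu$ defined when $s(\lambda)=r(\mu)$, $v\Lambda^n=\{\lambda\in\Lambda^n:r(\lambda)=v\}$. Row-finite: $v\Lambda^n$ finite; no sources: $v\Lambda^n\ne\emptyset$. Kumjian-Pask $\Lambda$-family in an $R$-algebra $A$: $P:\Lambda^0\to A$, $S:\Lambda^{\ne0}\cup\{\lambda^*:\lambda\in\Lambda^{\neq0}\}\to A$ (with $\Lambda^{\neq0}$ the paths of nonzero degree) such that (KP1) $P_v$ are mutually orthogonal idempotents; (KP2) for $r(\mu)=s(\lambda)$: $S_\lambda S_\mu=S_{\lambda\mu}$, $S_{\mu^*}S_{\lambda^*}=S_{(\lambda\mu)^*}$, $P_{r(\lambda)}S_\lambda=S_\lambda=S_\lambda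 P_{s(\lambda)}$, $P_{s(\lambda)}S_{\lambda^*}=S_{\lambda^*}=S_{\lambda^*}P_{r(\lambda)}$; (KP3) $S_{\lambda^*}S_\mu=\delta_{\lambda,\mu}P_{s(\lambda)}$ when $d(\lambda)=d(\mu)$; (KP4) $P_v=\sum_{\lambda\in v\Lambda^n}S_\lambda S_{\lambda^*}$ for $n\ne0$. $\mathrm{KP}_R(\Lambda)$ is the $R$-algebra generated by a universal such family $(p,s)$. Convention: for a vertex $v$, $s_v$ and $s_{v^*}$ both mean $p_v$. *)

theory Defs
  imports Main "HOL-Library.Countable_Set"
begin

text \<open>Degrees: N^k is represented by functions nat => nat vanishing from index k on.
 A k-graph is given by its set of morphisms L (vertices = identity morphisms = degree-0
 morphisms), range r, source s, degree d and composition cmp (cmp l m = l m, defined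
 when s l = r m).\<close>

definition Nk :: "nat \<Rightarrow> (nat \<Rightarrow> nat) set" where
  "Nk k = {n. \<forall>i\<ge>k. n i = 0}"

definition is_kgraph ::
  "nat \<Rightarrow> 'p set \<Rightarrow> ('p \<Rightarrow> 'p) \<Rightarrow> ('p \<Rightarrow> 'p) \<Rightarrow> ('p \<Rightarrow> nat \<Rightarrow> nat) \<Rightarrow> ('p \<Rightarrow> 'p \<Rightarrow> 'p) \<Rightarrow> bool"
where
  "is_kgraph k L r s d cmp \<longleftrightarrow>
     countable L \<and>
     (\<forall>l\<in>L. d l \<in> Nk k) \<and>
     (\<forall>l\<in>L. r l \<in> L \<and> s l \<in> L) \<and>
     (\<forall>l\<in>L. r (r l) = r l \<and> s (r l) = r l \<and> r (s l) = s l \<and> s (s l) = s l) \<and>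
     (\<forall>l\<in>L. d (r l) = (\<lambda>_. 0) \<and> d (s l) = (\<lambda>_. 0)) \<and>
     (\<forall>l\<in>L. \<forall>m\<in>L. s l = r m \<longrightarrow>
        cmp l m \<in> L \<and> r (cmp l m) = r l \<and> s (cmp l m) = s m \<and>
        d (cmp l m) = (\<lambda>i. d l i + d m i)) \<and>
     (\<forall>l\<in>L. cmp (r l) l = l \<and> cmp l (s l) = l) \<and>
     (\<forall>l\<in>L. \<forall>m\<in>L. \<forall>n\<in>L. s l = r m \<and> s m = r n \<longrightarrow>
        cmp (cmp l m) n = cmp l (cmp m n)) \<and>
     (\<forall>l\<in>L. \<forall>m n. d l = (\<lambda>i. m i + n i) \<longrightarrow>
        (\<exists>a b. a \<in> L \<and> b \<in> L \<and> s a = r b \<and> d a = m \<and> d b = n \<and> cmp a b = l \<and>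
           (\<forall>a' b'. a' \<in> L \<and> b' \<in> L \<and> s a' = r b' \<and> d a' = m \<and> d b' = n \<and> cmp a' b' = l
              \<longrightarrow> a' = a \<and> b' = b)))"

definition vertices :: "'p set \<Rightarrow> ('p \<Rightarrow> nat \<Rightarrow> nat) \<Rightarrow> 'p set" where
  "vertices L d = {v \<in> L. d v = (\<lambda>_. 0)}"

definition vpaths :: "'p set \<Rightarrow> ('p \<Rightarrow> 'p) \<Rightarrow> ('p \<Rightarrow> nat \<Rightarrow> nat) \<Rightarrow> 'p \<Rightarrow> (nat \<Rightarrow> nat) \<Rightarrow> 'p set" where
  "vpaths L r d v n = {l \<in> L. r l = v \<and> d l = n}"

definition row_finite :: "nat \<Rightarrow> 'p set \<Rightarrow> ('p \<Rightarrow> 'p) \<Rightarrow> ('p \<Rightarrow> nat \<Rightarrow> nat) \<Rightarrow> bool" where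
  "row_finite k L r d \<longleftrightarrow> (\<forall>v\<in>vertices L d. \<forall>n\<in>Nk k. finite (vpaths L r d v n))"

definition no_sources :: "nat \<Rightarrow> 'p set \<Rightarrow> ('p \<Rightarrow> 'p) \<Rightarrow> ('p \<Rightarrow> nat \<Rightarrow> nat) \<Rightarrow> bool" where
  "no_sources k L r d \<longleftrightarrow> (\<forall>v\<in>vertices L d. \<forall>n\<in>Nk k. vpaths L r d v n \<noteq> {})"

text \<open>Elements of the free R-algebra R<X> are finitely supported functions from words
 (lists of generators) to R; multiplication is convolution along concatenation.\<close>

definition fin_supp :: "('g list \<Rightarrow> 'r::zero) \<Rightarrow> bool" where
  "fin_supp f \<longleftrightarrow> finite {w. f w \<noteq> 0}"

definition wmono :: "'g list \<Rightarrow> 'g list \<Rightarrow> 'r::zero_neq_one" where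
  "wmono u = (\<lambda>w. if w = u then 1 else 0)"

definition fmul :: "('g list \<Rightarrow> 'r::comm_ring_1) \<Rightarrow> ('g list \<Rightarrow> 'r) \<Rightarrow> 'g list \<Rightarrow> 'r" where
  "fmul f g = (\<lambda>w. \<Sum>i\<le>length w. f (take i w) * g (drop i w))"

definition fsub :: "('g list \<Rightarrow> 'r::comm_ring_1) \<Rightarrow> ('g list \<Rightarrow> 'r) \<Rightarrow> 'g list \<Rightarrow> 'r" where
  "fsub f g = (\<lambda>w. f w - g w)"

inductive_set gen_ideal :: "('g list \<Rightarrow> 'r::comm_ring_1) set \<Rightarrow> ('g list \<Rightarrow> 'r) set"
  for G :: "('g list \<Rightarrow> 'r::comm_ring_1) set" where
  gen: "x \<in> G \<Longrightarrow> x \<in> gen_ideal G"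
| zero: "(\<lambda>_. 0) \<in> gen_ideal G"
| add: "x \<in> gen_ideal G \<Longrightarrow> y \<in> gen_ideal G \<Longrightarrow> (\<lambda>w. x w + y w) \<in> gen_ideal G"
| lmul: "fin_supp a \<Longrightarrow> x \<in> gen_ideal G \<Longrightarrow> fmul a x \<in> gen_ideal G"
| rmul: "fin_supp a \<Longrightarrow> x \<in> gen_ideal G \<Longrightarrow> fmul x a \<in> gen_ideal G"

datatype 'p kpgen = Pg 'p | Sg 'p | Sstg 'p

text \<open>Convention: for a vertex v, s_v and s_{v*} both mean p_v.\<close>
definition sgen :: "('p \<Rightarrow> nat \<Rightarrow> nat) \<Rightarrow> 'p \<Rightarrow> 'p kpgen" where
  "sgen d l = (if d l = (\<lambda>_. 0) then Pg l else Sg l)"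

definition sgen_star :: "('p \<Rightarrow> nat \<Rightarrow> nat) \<Rightarrow> 'p \<Rightarrow> 'p kpgen" where
  "sgen_star d l = (if d l = (\<lambda>_. 0) then Pg l else Sstg l)"

text \<open>The relations (KP1)-(KP4), each written as an element "lhs - rhs" of R<X>.\<close>
definition kp_rels ::
  "nat \<Rightarrow> 'p set \<Rightarrow> ('p \<Rightarrow> 'p) \<Rightarrow> ('p \<Rightarrow> 'p) \<Rightarrow> ('p \<Rightarrow> nat \<Rightarrow> nat) \<Rightarrow> ('p \<Rightarrow> 'p \<Rightarrow> 'p)
   \<Rightarrow> ('p kpgen list \<Rightarrow> 'r::comm_ring_1) set"
where
  "kp_rels k L r s d cmp =
     \<comment> \<open>KP1\<close>
     {fsub (wmono [Pg v, Pg w]) (if v = w then wmono [Pg v] else (\<lambda>_. 0)) | v w.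
        v \<in> vertices L d \<and> w \<in> vertices L d}
   \<union> \<comment> \<open>KP2\<close>
     {fsub (wmono [Sg l, Sg m]) (wmono [Sg (cmp l m)]) | l m.
        l \<in> L \<and> m \<in> L \<and> d l \<noteq> (\<lambda>_. 0) \<and> d m \<noteq> (\<lambda>_. 0) \<and> s l = r m}
   \<union> {fsub (wmono [Sstg m, Sstg l]) (wmono [Sstg (cmp l m)]) | l m.
        l \<in> L \<and> m \<in> L \<and> d l \<noteq> (\<lambda>_. 0) \<and> d m \<noteq> (\<lambda>_. 0) \<and> s l = r m}
   \<union> {fsub (wmono [Pg (r l), Sg l]) (wmono [Sg l]) | l. l \<in> L \<and> d l \<noteq> (\<lambda>_. 0)}
   \<union> {fsub (wmono [Sg l, Pg (s l)]) (wmono [Sg l]) | l. l \<in> L \<and> d l \<noteq> (\<lambda>_. 0)}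
   \<union> {fsub (wmono [Pg (s l), Sstg l]) (wmono [Sstg l]) | l. l \<in> L \<and> d l \<noteq> (\<lambda>_. 0)}
   \<union> {fsub (wmono [Sstg l, Pg (r l)]) (wmono [Sstg l]) | l. l \<in> L \<and> d l \<noteq> (\<lambda>_. 0)}
   \<union> \<comment> \<open>KP3\<close>
     {fsub (wmono [Sstg l, Sg m]) (if l = m then wmono [Pg (s l)] else (\<lambda>_. 0)) | l m.
        l \<in> L \<and> m \<in> L \<and> d l = d m \<and> d l \<noteq> (\<lambda>_. 0)}
   \<union> \<comment> \<open>KP4\<close>
     {fsub (wmono [Pg v]) (\<lambda>w. \<Sum>l\<in>vpaths L r d v n. wmono [Sg l, Sstg l] w) | v n.
        v \<in> vertices L d \<and> n \<in> Nk k \<and> n \<noteq> (\<lambda>_. 0)}"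

text \<open>KP_R(Lambda) = R<X> / (ideal generated by the KP relations); an element x of R<X>
 represents 0 in KP_R(Lambda) iff it lies in this ideal.\<close>
definition kp_ideal ::
  "nat \<Rightarrow> 'p set \<Rightarrow> ('p \<Rightarrow> 'p) \<Rightarrow> ('p \<Rightarrow> 'p) \<Rightarrow> ('p \<Rightarrow> nat \<Rightarrow> nat) \<Rightarrow> ('p \<Rightarrow> 'p \<Rightarrow> 'p)
   \<Rightarrow> ('p kpgen list \<Rightarrow> 'r::comm_ring_1) set"
where
  "kp_ideal k L r s d cmp = gen_ideal (kp_rels k L r s d cmp)"

end

theory Submission
  imports Defs "HOL-Library.Function_Algebras"
begin



lemma Nk_add: "a \<in> Nk k \<Longrightarrow> b \<in> Nk k \<Longrightarrow> a + b \<in> Nk k"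
  by (simp add: Nk_def)
lemma Nk_le: "a \<le> b \<Longrightarrow> b \<in> Nk k \<Longrightarrow> a \<in> Nk k"
  by (auto simp: Nk_def le_fun_def) (metis le_zero_eq)
lemma Nk_0: "0 \<in> Nk k" by (simp add: Nk_def)

lemma fun_le_add1: "(a::nat\<Rightarrow>nat) \<le> a + b" by (simp add: le_fun_def)
lemma fun_le_add2: "(b::nat\<Rightarrow>nat) \<le> a + b" by (simp add: le_fun_def)
lemma fun_le_split: "(a::nat\<Rightarrow>nat) \<le> b \<Longrightarrow> b = a + (b - a)"
  by (auto simp: le_fun_def fun_eq_iff)
lemma fun_add_cancel: "(a::nat\<Rightarrow>nat) + b = a + c \<Longrightarrow> b = c" by simp
lemma fun_add_le_mono: "(a::nat\<Rightarrow>nat) \<le> b \<Longrightarrow> c + a \<le> c + b"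
  by (simp add: le_fun_def)

locale kg =
  fixes k :: nat and L :: "'p set" and r s :: "'p \<Rightarrow> 'p"
    and d :: "'p \<Rightarrow> nat \<Rightarrow> nat" and cmp :: "'p \<Rightarrow> 'p \<Rightarrow> 'p"
  assumes kg: "is_kgraph k L r s d cmp"
begin

lemma dNk: "l \<in> L \<Longrightarrow> d l \<in> Nk k" using kg by (simp add: is_kgraph_def)
lemma rL: "l \<in> L \<Longrightarrow> r l \<in> L" using kg by (simp add: is_kgraph_def)
lemma sL: "l \<in> L \<Longrightarrow> s l \<in> L" using kg by (simp add: is_kgraph_def)
lemma rr: "l \<in> L \<Longrightarrow> r (r l) = r l" using kg by (simp add: is_kgraph_def)
lemma sr: "l \<in> L \<Longrightarrow> s (r l) = r l" using kg by (simp add: is_kgraph_def)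
lemma rs: "l \<in> L \<Longrightarrow> r (s l) = s l" using kg by (simp add: is_kgraph_def)
lemma ss: "l \<in> L \<Longrightarrow> s (s l) = s l" using kg by (simp add: is_kgraph_def)
lemma dr: "l \<in> L \<Longrightarrow> d (r l) = 0" using kg by (simp add: is_kgraph_def zero_fun_def)
lemma ds: "l \<in> L \<Longrightarrow> d (s l) = 0" using kg by (simp add: is_kgraph_def zero_fun_def)
lemma cmpL: "l \<in> L \<Longrightarrow> m \<in> L \<Longrightarrow> s l = r m \<Longrightarrow> cmp l m \<in> L"
  using kg by (simp add: is_kgraph_def)
lemma r_cmp: "l \<in> L \<Longrightarrow> m \<in> L \<Longrightarrow> s l = r m \<Longrightarrow> r (cmp l m) = r l"
  using kg by (simp add: is_kgraph_def)
lemma s_cmp: "l \<in> L \<Longrightarrow> m \<in> L \<Longrightarrow> s l = r m \<Longrightarrow> s (cmp l m) = s m"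
  using kg by (simp add: is_kgraph_def)
lemma d_cmp: "l \<in> L \<Longrightarrow> m \<in> L \<Longrightarrow> s l = r m \<Longrightarrow> d (cmp l m) = d l + d m"
  using kg by (simp add: is_kgraph_def plus_fun_def)
lemma cmp_r: "l \<in> L \<Longrightarrow> cmp (r l) l = l" using kg by (simp add: is_kgraph_def)
lemma cmp_s: "l \<in> L \<Longrightarrow> cmp l (s l) = l" using kg by (simp add: is_kgraph_def)
lemma assoc: "l \<in> L \<Longrightarrow> m \<in> L \<Longrightarrow> n \<in> L \<Longrightarrow> s l = r m \<Longrightarrow> s m = r n \<Longrightarrow>
   cmp (cmp l m) n = cmp l (cmp m n)"
  using kg unfolding is_kgraph_def by blast

definition isfac where
  "isfac l m a b \<longleftrightarrow> a \<in> L \<and> b \<in> L \<and> s a = r b \<and> d a = m \<and> cmp a b = l"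

lemma isfac_ex: assumes "l \<in> L" "m \<le> d l" shows "\<exists>a b. isfac l m a b"
proof -
  have "d l = (\<lambda>i. m i + (d l - m) i)" using fun_le_split[OF assms(2)] by (metis plus_fun_def)
  then show ?thesis using kg assms(1) unfolding is_kgraph_def isfac_def by blast
qed

lemma isfac_uniq: assumes "isfac l m a b" "isfac l m a' b'" shows "a = a' \<and> b = b'"
proof -
  have lL: "l \<in> L" using assms(1) cmpL unfolding isfac_def by blast
  have "d l = m + d b" using assms(1) d_cmp unfolding isfac_def by metis
  moreover have "d l = m + d b'" using assms(2) d_cmp unfolding isfac_def by metis
  ultimately have db: "d b' = d b" by simp
  have "d l = (\<lambda>i. m i + d b i)" using \<open>d l = m + d b\<close> by (simp add: plus_fun_def)
  then obtain a0 b0 where "\<forall>a' b'. a' \<in> L \<and> b' \<in> L \<and> s a' = r b' \<and> d a' = m \<and> d b' = d b \<and> cmp a' b' = l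
              \<longrightarrow> a' = a0 \<and> b' = b0"
    using kg lL unfolding is_kgraph_def by blast
  then show ?thesis using assms db unfolding isfac_def by metis
qed

definition fac where "fac l m = (THE p. isfac l m (fst p) (snd p))"
definition fac1 where "fac1 l m = fst (fac l m)"
definition fac2 where "fac2 l m = snd (fac l m)"

lemma isfac_fac: assumes "l \<in> L" "m \<le> d l" shows "isfac l m (fac1 l m) (fac2 l m)"
proof -
  obtain a b where ab: "isfac l m a b" using isfac_ex assms by blast
  have "isfac l m (fst (fac l m)) (snd (fac l m))" unfolding fac_def
    apply (rule theI[of _ "(a,b)"]) using ab isfac_uniq by auto
  then show ?thesis by (simp add: fac1_def fac2_def)
qed

lemma isfac_dle: "isfac l m a b \<Longrightarrow> m \<le> d l"
  unfolding isfac_def using d_cmp fun_le_add1 by metis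

lemma fac_eq: assumes "isfac l m a b" shows "fac1 l m = a" "fac2 l m = b"
proof -
  have "l \<in> L" using assms cmpL unfolding isfac_def by blast
  then have "isfac l m (fac1 l m) (fac2 l m)" using isfac_fac isfac_dle assms by blast
  then show "fac1 l m = a" "fac2 l m = b" using isfac_uniq assms by blast+
qed

lemma fac_props: assumes "l \<in> L" "m \<le> d l"
  shows "fac1 l m \<in> L" "fac2 l m \<in> L" "s (fac1 l m) = r (fac2 l m)" "d (fac1 l m) = m"
    "cmp (fac1 l m) (fac2 l m) = l" "d l = m + d (fac2 l m)"
    "r (fac1 l m) = r l" "s (fac2 l m) = s l"
  using isfac_fac[OF assms] d_cmp r_cmp s_cmp unfolding isfac_def by metis+

lemma d_fac2: assumes "l \<in> L" "d l = m + n" shows "d (fac2 l m) = n"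
  using fac_props(6)[OF assms(1)] assms(2) fun_le_add1 by (metis add_left_cancel)

lemma fac_cmp: assumes "a \<in> L" "b \<in> L" "s a = r b"
  shows "fac1 (cmp a b) (d a) = a" "fac2 (cmp a b) (d a) = b"
  using fac_eq[of "cmp a b" "d a" a b] assms unfolding isfac_def by auto

lemma fac_G: assumes "a \<in> L" "b \<in> L" "s a = r b" "m \<le> d a"
  shows "fac1 (cmp a b) m = fac1 a m" "fac2 (cmp a b) m = cmp (fac2 a m) b"
proof -
  note P = fac_props[OF assms(1,4)]
  have "cmp a b = cmp (fac1 a m) (cmp (fac2 a m) b)"
    using assoc[of "fac1 a m" "fac2 a m" b] P assms by auto
  moreover have "cmp (fac2 a m) b \<in> L" using cmpL P assms by auto
  moreover have "r (cmp (fac2 a m) b) = r (fac2 a m)" using r_cmp P assms by auto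
  ultimately have "isfac (cmp a b) m (fac1 a m) (cmp (fac2 a m) b)"
    unfolding isfac_def using P by auto
  then show "fac1 (cmp a b) m = fac1 a m" "fac2 (cmp a b) m = cmp (fac2 a m) b"
    using fac_eq by auto
qed

lemma fac_0: assumes "l \<in> L" shows "fac1 l 0 = r l" "fac2 l 0 = l"
proof -
  have "isfac l 0 (r l) l" unfolding isfac_def using assms rL sr dr cmp_r by auto
  then show "fac1 l 0 = r l" "fac2 l 0 = l" using fac_eq by auto
qed

lemma fac_top: assumes "l \<in> L" shows "fac1 l (d l) = l" "fac2 l (d l) = s l"
proof -
  have "isfac l (d l) l (s l)" unfolding isfac_def using assms sL rs cmp_s by auto
  then show "fac1 l (d l) = l" "fac2 l (d l) = s l" using fac_eq by auto
qed

lemma deg0: assumes "l \<in> L" "d l = 0" shows "r l = l" "s l = l"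
proof -
  have "isfac l 0 (r l) l" unfolding isfac_def using assms rL sr dr cmp_r by auto
  moreover have "isfac l 0 l (s l)" unfolding isfac_def using assms sL rs cmp_s by auto
  ultimately show "r l = l" using isfac_uniq by blast
  then show "s l = l" using sr assms by metis
qed

lemma fac1_fac1: assumes "l \<in> L" "m \<le> m'" "m' \<le> d l"
  shows "fac1 (fac1 l m') m = fac1 l m"
proof -
  note P = fac_props[OF assms(1,3)]
  have "fac1 l m = fac1 (cmp (fac1 l m') (fac2 l m')) m" using P by simp
  also have "\<dots> = fac1 (fac1 l m') m" using fac_G(1)[of "fac1 l m'" "fac2 l m'" m] P assms by simp
  finally show ?thesis by simp
qed

lemma fac2_fac2: assumes "l \<in> L" "q + p \<le> d l"
  shows "fac2 (fac2 l q) p = fac2 l (q + p)" "fac1 (fac2 l q) p = fac2 (fac1 l (q+p)) q"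
proof -
  have q: "q \<le> d l" using assms(2) fun_le_add1 order_trans by blast
  note P = fac_props[OF assms(1) q]
  have p: "p \<le> d (fac2 l q)"
    using assms(2) P(6) by (metis add_le_cancel_left)
  note Q = fac_props[OF P(2) p]
  have e: "l = cmp (cmp (fac1 l q) (fac1 (fac2 l q) p)) (fac2 (fac2 l q) p)"
    using assoc[of "fac1 l q" "fac1 (fac2 l q) p" "fac2 (fac2 l q) p"] P Q by auto
  have c: "cmp (fac1 l q) (fac1 (fac2 l q) p) \<in> L" using cmpL P Q by auto
  have dc: "d (cmp (fac1 l q) (fac1 (fac2 l q) p)) = q + p" using d_cmp P Q by auto
  have sc: "s (cmp (fac1 l q) (fac1 (fac2 l q) p)) = r (fac2 (fac2 l q) p)"
    using s_cmp P Q by auto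
  have "isfac l (q+p) (cmp (fac1 l q) (fac1 (fac2 l q) p)) (fac2 (fac2 l q) p)"
    unfolding isfac_def using e c dc sc Q by auto
  note E = fac_eq[OF this]
  then show "fac2 (fac2 l q) p = fac2 l (q + p)" by simp
  have "fac2 (fac1 l (q+p)) q = fac2 (cmp (fac1 l q) (fac1 (fac2 l q) p)) q"
    using E by simp
  also have "\<dots> = fac1 (fac2 l q) p" using fac_cmp(2) P Q by (metis)
  finally show "fac1 (fac2 l q) p = fac2 (fac1 l (q+p)) q" by simp
qed

end


context kg begin

definition IP :: "((nat \<Rightarrow> nat) \<Rightarrow> 'p) \<Rightarrow> bool" where
  "IP x \<longleftrightarrow> (\<forall>n\<in>Nk k. x n \<in> L \<and> d (x n) = n) \<and>
     (\<forall>n\<in>Nk k. \<forall>p\<in>Nk k. n \<le> p \<longrightarrow> fac1 (x p) n = x n) \<and>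
     (\<forall>n. n \<notin> Nk k \<longrightarrow> x n = undefined)"

definition cat :: "'p \<Rightarrow> ((nat \<Rightarrow> nat) \<Rightarrow> 'p) \<Rightarrow> (nat \<Rightarrow> nat) \<Rightarrow> 'p" where
  "cat l x = (\<lambda>n. if n \<in> Nk k then fac1 (cmp l (x n)) n else undefined)"

definition shift :: "(nat \<Rightarrow> nat) \<Rightarrow> ((nat \<Rightarrow> nat) \<Rightarrow> 'p) \<Rightarrow> (nat \<Rightarrow> nat) \<Rightarrow> 'p" where
  "shift p x = (\<lambda>n. if n \<in> Nk k then fac2 (x (p + n)) p else undefined)"

lemma IP_L: "IP x \<Longrightarrow> n \<in> Nk k \<Longrightarrow> x n \<in> L" unfolding IP_def by blast
lemma IP_d: "IP x \<Longrightarrow> n \<in> Nk k \<Longrightarrow> d (x n) = n" unfolding IP_def by blast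
lemma IP_fac: "IP x \<Longrightarrow> n \<in> Nk k \<Longrightarrow> p \<in> Nk k \<Longrightarrow> n \<le> p \<Longrightarrow> fac1 (x p) n = x n"
  unfolding IP_def by blast
lemma IP_ext: assumes "IP x" "IP y" "\<And>n. n \<in> Nk k \<Longrightarrow> x n = y n" shows "x = y"
  using assms unfolding IP_def by (metis ext)

lemma IP_r: assumes "IP x" "n \<in> Nk k" shows "r (x n) = x 0"
proof -
  have "x 0 = fac1 (x n) 0" using IP_fac[OF assms(1) Nk_0 assms(2)] by (simp add: le_fun_def)
  also have "\<dots> = r (x n)" using fac_0 IP_L assms by auto
  finally show ?thesis by simp
qed

lemma IP_0L: "IP x \<Longrightarrow> x 0 \<in> L" using IP_L Nk_0 by blast
lemma IP_0d: "IP x \<Longrightarrow> d (x 0) = 0" using IP_d Nk_0 by blast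

lemma IP_split: assumes "IP x" "n \<in> Nk k" "p \<in> Nk k" "n \<le> p"
  shows "x p = cmp (x n) (fac2 (x p) n)" "fac2 (x p) n \<in> L" "s (x n) = r (fac2 (x p) n)"
proof -
  have le: "n \<le> d (x p)" using IP_d assms by auto
  note P = fac_props[OF IP_L[OF assms(1,3)] le]
  show "x p = cmp (x n) (fac2 (x p) n)" "fac2 (x p) n \<in> L" "s (x n) = r (fac2 (x p) n)"
    using P IP_fac[OF assms] by auto
qed

lemma IP_cat: assumes x: "IP x" and l: "l \<in> L" and sl: "s l = x 0"
  shows "IP (cat l x)"
proof -
  have A: "fac1 (cmp l (x n)) n \<in> L \<and> d (fac1 (cmp l (x n)) n) = n" if n: "n \<in> Nk k" for n
  proof -
    have c: "cmp l (x n) \<in> L" using cmpL l IP_L[OF x n] sl IP_r[OF x n] by auto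
    have "d (cmp l (x n)) = d l + n" using d_cmp l IP_L[OF x n] sl IP_r[OF x n] IP_d[OF x n] by auto
    hence "n \<le> d (cmp l (x n))" using fun_le_add2 by metis
    then show ?thesis using fac_props[OF c] by auto
  qed
  have B: "fac1 (cat l x p) n = cat l x n" if n: "n \<in> Nk k" and p: "p \<in> Nk k" and np: "n \<le> p" for n p
  proof -
    note S = IP_split[OF x n p np]
    have xnL: "x n \<in> L" using IP_L x n by auto
    have sx: "s l = r (x n)" using sl IP_r[OF x n] by simp
    have c: "cmp l (x p) \<in> L" using cmpL l IP_L[OF x p] sl IP_r[OF x p] by auto
    have dc: "d (cmp l (x p)) = d l + p" using d_cmp l IP_L[OF x p] sl IP_r[OF x p] IP_d[OF x p] by auto
    have "p \<le> d (cmp l (x p))" using dc fun_le_add2 by metis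
    hence 1: "fac1 (fac1 (cmp l (x p)) p) n = fac1 (cmp l (x p)) n" using fac1_fac1 c np by blast
    have eq: "cmp l (x p) = cmp (cmp l (x n)) (fac2 (x p) n)"
      using S assoc[of l "x n" "fac2 (x p) n"] l xnL sx by auto
    have "fac1 (cmp (cmp l (x n)) (fac2 (x p) n)) n = fac1 (cmp l (x n)) n"
    proof (rule fac_G(1))
      show "cmp l (x n) \<in> L" using cmpL l xnL sx by auto
      show "fac2 (x p) n \<in> L" using S by auto
      show "s (cmp l (x n)) = r (fac2 (x p) n)" using s_cmp l xnL sx S by auto
      show "n \<le> d (cmp l (x n))" using d_cmp l xnL sx IP_d[OF x n] fun_le_add2 by metis
    qed
    then have "fac1 (fac1 (cmp l (x p)) p) n = fac1 (cmp l (x n)) n" using 1 eq by simp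
    then show ?thesis using n p unfolding cat_def by simp
  qed
  show ?thesis unfolding IP_def using A B by (auto simp: cat_def)
qed

lemma cat_0: assumes x: "IP x" and l: "l \<in> L" and sl: "s l = x 0"
  shows "cat l x 0 = r l"
proof -
  have c: "cmp l (x 0) \<in> L" using cmpL l IP_0L[OF x] sl IP_r[OF x Nk_0] by auto
  have "fac1 (cmp l (x 0)) 0 = r (cmp l (x 0))" using fac_0 c by auto
  also have "\<dots> = r l" using r_cmp l IP_0L[OF x] sl IP_r[OF x Nk_0] by auto
  finally show ?thesis unfolding cat_def using Nk_0 by simp
qed

lemma cat_top: assumes x: "IP x" and l: "l \<in> L" and sl: "s l = x 0"
  shows "cat l x (d l) = l"
proof -
  have "fac1 (cmp l (x (d l))) (d l) = l"
    using fac_cmp(1) l IP_L[OF x dNk[OF l]] sl IP_r[OF x dNk[OF l]] by auto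
  then show ?thesis unfolding cat_def using dNk[OF l] by simp
qed

lemma IP_shift: assumes x: "IP x" and p: "p \<in> Nk k" shows "IP (shift p x)"
proof -
  have A: "fac2 (x (p+n)) p \<in> L \<and> d (fac2 (x (p+n)) p) = n" if n: "n \<in> Nk k" for n
  proof -
    have pn: "p + n \<in> Nk k" using Nk_add p n by auto
    have le: "p \<le> d (x (p+n))" using IP_d[OF x pn] fun_le_add1 by metis
    show ?thesis using fac_props[OF IP_L[OF x pn] le] d_fac2 IP_L[OF x pn] IP_d[OF x pn] by auto
  qed
  have B: "fac1 (shift p x q) n = shift p x n" if n: "n \<in> Nk k" and q: "q \<in> Nk k" and nq: "n \<le> q" for n q
  proof -
    have pq: "p + q \<in> Nk k" using Nk_add p q by auto
    have pn: "p + n \<in> Nk k" using Nk_add p n by auto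
    have "fac1 (fac2 (x (p+q)) p) n = fac2 (fac1 (x (p+q)) (p+n)) p"
      using fac2_fac2(2) IP_L[OF x pq] IP_d[OF x pq] fun_add_le_mono[OF nq] by metis
    also have "fac1 (x (p+q)) (p+n) = x (p+n)" using IP_fac[OF x pn pq] fun_add_le_mono[OF nq] by blast
    finally show ?thesis using n q unfolding shift_def by (simp add: plus_fun_def)
  qed
  show ?thesis unfolding IP_def using A B by (auto simp: shift_def)
qed

lemma shift_0v: assumes x: "IP x" and p: "p \<in> Nk k" shows "shift p x 0 = s (x p)"
proof -
  have "fac2 (x p) p = s (x p)" using fac_top IP_L[OF x p] IP_d[OF x p] by metis
  then show ?thesis unfolding shift_def using Nk_0 by simp
qed

lemma shift_cat: assumes x: "IP x" and l: "l \<in> L" and sl: "s l = x 0"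
  shows "shift (d l) (cat l x) = x"
proof (rule IP_ext)
  show "IP (shift (d l) (cat l x))" using IP_shift IP_cat assms dNk by blast
  show "IP x" by fact
  fix n assume n: "n \<in> Nk k"
  have ln: "d l + n \<in> Nk k" using Nk_add dNk[OF l] n by auto
  note S = IP_split[OF x n ln fun_le_add2]
  have xnL: "x n \<in> L" using IP_L x n by auto
  have sx: "s l = r (x n)" using sl IP_r[OF x n] by simp
  have c: "cmp l (x n) \<in> L" using cmpL l xnL sx by auto
  have dc: "d (cmp l (x n)) = d l + n" using d_cmp l xnL sx IP_d[OF x n] by auto
  have "cmp l (x (d l + n)) = cmp (cmp l (x n)) (fac2 (x (d l + n)) n)"
    using S assoc[of l "x n" "fac2 (x (d l + n)) n"] l xnL sx by auto
  hence "fac1 (cmp l (x (d l + n))) (d l + n) = cmp l (x n)"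
    using fac_cmp(1)[OF c S(2)] s_cmp l xnL sx S dc by auto
  hence "cat l x (d l + n) = cmp l (x n)" unfolding cat_def using ln by simp
  hence "shift (d l) (cat l x) n = fac2 (cmp l (x n)) (d l)" unfolding shift_def using n by simp
  also have "\<dots> = x n" using fac_cmp(2) l xnL sx by auto
  finally show "shift (d l) (cat l x) n = x n" .
qed

lemma cat_shift: assumes x: "IP x" and l: "l \<in> L" and xl: "x (d l) = l"
  shows "cat l (shift (d l) x) = x"
proof (rule IP_ext)
  have sl: "s l = shift (d l) x 0" using shift_0v[OF x dNk[OF l]] xl by simp
  show "IP (cat l (shift (d l) x))" using IP_shift IP_cat assms dNk sl by metis
  show "IP x" by fact
  fix n assume n: "n \<in> Nk k"
  have ln: "d l + n \<in> Nk k" using Nk_add dNk[OF l] n by auto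
  note S = IP_split[OF x dNk[OF l] ln fun_le_add1]
  have "cmp l (fac2 (x (d l + n)) (d l)) = x (d l + n)" using S xl by simp
  hence "cat l (shift (d l) x) n = fac1 (x (d l + n)) n" unfolding cat_def shift_def using n by simp
  also have "\<dots> = x n" using IP_fac[OF x n ln fun_le_add2] .
  finally show "cat l (shift (d l) x) n = x n" .
qed

lemma cat_cat: assumes x: "IP x" and l: "l \<in> L" and m: "m \<in> L" and sl: "s l = x 0" and sm: "s m = r l"
  shows "cat m (cat l x) = cat (cmp m l) x"
proof -
  have "fac1 (cmp m (fac1 (cmp l (x n)) n)) n = fac1 (cmp (cmp m l) (x n)) n" if n: "n \<in> Nk k" for n
  proof -
    have xnL: "x n \<in> L" using IP_L x n by auto
    have sx: "s l = r (x n)" using sl IP_r[OF x n] by simp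
    have c: "cmp l (x n) \<in> L" using cmpL l xnL sx by auto
    have le: "n \<le> d (cmp l (x n))" using d_cmp l xnL sx IP_d[OF x n] fun_le_add2 by metis
    note P = fac_props[OF c le]
    have rc: "r (cmp l (x n)) = r l" using r_cmp l xnL sx by auto
    have "cmp (cmp m l) (x n) = cmp m (cmp l (x n))" using assoc m l xnL sm sx by auto
    also have "\<dots> = cmp m (cmp (fac1 (cmp l (x n)) n) (fac2 (cmp l (x n)) n))" using P by simp
    also have "\<dots> = cmp (cmp m (fac1 (cmp l (x n)) n)) (fac2 (cmp l (x n)) n)"
      using assoc[of m "fac1 (cmp l (x n)) n" "fac2 (cmp l (x n)) n"] m P rc sm by auto
    finally have e: "cmp (cmp m l) (x n) = cmp (cmp m (fac1 (cmp l (x n)) n)) (fac2 (cmp l (x n)) n)" .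
    have "fac1 (cmp (cmp m (fac1 (cmp l (x n)) n)) (fac2 (cmp l (x n)) n)) n = fac1 (cmp m (fac1 (cmp l (x n)) n)) n"
    proof (rule fac_G(1))
      show "cmp m (fac1 (cmp l (x n)) n) \<in> L" using cmpL m P rc sm by auto
      show "fac2 (cmp l (x n)) n \<in> L" using P by auto
      show "s (cmp m (fac1 (cmp l (x n)) n)) = r (fac2 (cmp l (x n)) n)" using s_cmp m P rc sm by auto
      show "n \<le> d (cmp m (fac1 (cmp l (x n)) n))" using d_cmp m P rc sm fun_le_add2 by metis
    qed
    then show ?thesis using e by simp
  qed
  moreover have "cat l x n = fac1 (cmp l (x n)) n" if "n \<in> Nk k" for n using that unfolding cat_def by simp
  ultimately show ?thesis unfolding cat_def by (auto simp: fun_eq_iff)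
qed

lemma shift_shift: assumes x: "IP x" and p: "p \<in> Nk k" and q: "q \<in> Nk k"
  shows "shift p (shift q x) = shift (q + p) x"
proof -
  have "fac2 (fac2 (x (q + (p + n))) q) p = fac2 (x (q + p + n)) (q + p)" if n: "n \<in> Nk k" for n
  proof -
    have qpn: "q + p + n \<in> Nk k" using Nk_add p q n by auto
    have "q + p \<le> d (x (q + p + n))" using IP_d[OF x qpn] fun_le_add1 by metis
    then show ?thesis using fac2_fac2(1) IP_L[OF x qpn] by (simp add: add.assoc)
  qed
  then show ?thesis unfolding shift_def using Nk_add p by (auto simp: fun_eq_iff add.assoc)
qed

lemma shift_zero: assumes x: "IP x" shows "shift 0 x = x"
  using IP_ext[OF IP_shift[OF x Nk_0] x] fac_0(2) IP_L[OF x] unfolding shift_def by auto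

lemma star_equiv: assumes x: "IP x" and l: "l \<in> L" and m: "m \<in> L" and lm: "s l = r m"
  shows "x (d l + d m) = cmp l m \<longleftrightarrow> x (d l) = l \<and> shift (d l) x (d m) = m"
proof -
  have ln: "d l + d m \<in> Nk k" using Nk_add dNk l m by auto
  note S = IP_split[OF x dNk[OF l] ln fun_le_add1]
  have sh: "shift (d l) x (d m) = fac2 (x (d l + d m)) (d l)" unfolding shift_def using dNk[OF m] by simp
  show ?thesis
  proof
    assume "x (d l + d m) = cmp l m"
    then show "x (d l) = l \<and> shift (d l) x (d m) = m"
      using sh IP_fac[OF x dNk[OF l] ln fun_le_add1] fac_cmp[OF l m lm] by auto
  next
    assume "x (d l) = l \<and> shift (d l) x (d m) = m"
    then show "x (d l + d m) = cmp l m" using S sh by metis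
  qed
qed

end


context kg begin

definition dg :: "nat \<Rightarrow> nat \<Rightarrow> nat" where "dg j = (\<lambda>i. if i < k then j else 0)"

lemma dg_Nk: "dg j \<in> Nk k" by (simp add: dg_def Nk_def)
lemma dg_mono: "j \<le> j' \<Longrightarrow> dg j \<le> dg j'" by (simp add: dg_def le_fun_def)
lemma dg_Suc: "dg (Suc j) = dg j + dg 1" by (simp add: dg_def fun_eq_iff)
lemma dg_0: "dg 0 = 0" by (simp add: dg_def fun_eq_iff)

lemma exists_IP:
  assumes ns: "no_sources k L r d" and v: "v \<in> vertices L d"
  shows "\<exists>x. IP x \<and> x 0 = v"
proof -
  define z where "z = rec_nat v (\<lambda>j zj. cmp zj (SOME t. t \<in> vpaths L r d (s zj) (dg 1)))"
  have z0: "z 0 = v" and zS: "\<And>j. z (Suc j) = cmp (z j) (SOME t. t \<in> vpaths L r d (s (z j)) (dg 1))"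
    unfolding z_def by auto
  have vL: "v \<in> L" and dv: "d v = 0" using v by (auto simp: vertices_def zero_fun_def)
  have rv: "r v = v" using deg0 vL dv by auto
  have inv: "z j \<in> L \<and> d (z j) = dg j \<and> r (z j) = v" for j
  proof (induction j)
    case 0 then show ?case using z0 vL dv rv dg_0 by auto
  next
    case (Suc j)
    have "s (z j) \<in> vertices L d" using sL ds Suc by (auto simp: vertices_def zero_fun_def)
    then have "vpaths L r d (s (z j)) (dg 1) \<noteq> {}" using ns dg_Nk unfolding no_sources_def by blast
    then have t: "(SOME t. t \<in> vpaths L r d (s (z j)) (dg 1)) \<in> vpaths L r d (s (z j)) (dg 1)"
      by (metis ex_in_conv someI_ex)
    then have tt: "(SOME t. t \<in> L \<and> r t = s (z j) \<and> d t = dg 1) \<in> L \<and> r (SOME t. t \<in> L \<and> r t = s (z j) \<and> d t = dg 1) = s (z j) \<and> d (SOME t. t \<in> L \<and> r t = s (z j) \<and> d t = dg 1) = dg 1"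
      unfolding vpaths_def by simp
    have ZS: "z (Suc j) = cmp (z j) (SOME t. t \<in> L \<and> r t = s (z j) \<and> d t = dg 1)"
      using zS[of j] unfolding vpaths_def by simp
    show ?case unfolding ZS using Suc tt cmpL[of "z j"] d_cmp[of "z j"] r_cmp[of "z j"] dg_Suc[of j] by simp
  qed
  have pre: "j \<le> j' \<Longrightarrow> fac1 (z j') (dg j) = z j" for j j'
  proof (induction j')
    case 0 then show ?case using inv[of 0] fac_top[of "z 0"] by simp
  next
    case (Suc j')
    define t where "t = (SOME t. t \<in> vpaths L r d (s (z j')) (dg 1))"
    have "s (z j') \<in> vertices L d" using sL ds inv by (auto simp: vertices_def zero_fun_def)
    then have "vpaths L r d (s (z j')) (dg 1) \<noteq> {}" using ns dg_Nk unfolding no_sources_def by blast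
    then have "t \<in> vpaths L r d (s (z j')) (dg 1)" unfolding t_def by (metis ex_in_conv someI_ex)
    then have t: "t \<in> L" "r t = s (z j')" by (auto simp: vpaths_def)
    have zs: "z (Suc j') = cmp (z j') t" using zS t_def by simp
    show ?case
    proof (cases "j = Suc j'")
      case True then show ?thesis using fac_top(1)[of "z (Suc j')"] inv[of "Suc j'"] by simp
    next
      case False
      then have "j \<le> j'" using Suc by auto
      have "fac1 (cmp (z j') t) (dg j) = fac1 (z j') (dg j)"
        by (rule fac_G(1)) (use inv[of j'] t dg_mono[OF \<open>j \<le> j'\<close>] in auto)
      then show ?thesis using zs Suc.IH \<open>j \<le> j'\<close> by simp
    qed
  qed
  define J where "J n = sum n {..<k}" for n :: "nat \<Rightarrow> nat"
  have J1: "n \<in> Nk k \<Longrightarrow> n \<le> dg (J n)" for n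
  proof -
    assume n: "n \<in> Nk k"
    have "n i \<le> dg (J n) i" for i
    proof (cases "i < k")
      case True then show ?thesis unfolding dg_def J_def
        using member_le_sum[of i "{..<k}" n] by auto
    next
      case False then show ?thesis using n by (auto simp: Nk_def dg_def)
    qed
    then show ?thesis by (simp add: le_fun_def)
  qed
  have J2: "n \<le> p \<Longrightarrow> J n \<le> J p" for n p unfolding J_def by (simp add: le_fun_def sum_mono)
  define x where "x n = (if n \<in> Nk k then fac1 (z (J n)) n else undefined)" for n
  have A: "x n \<in> L \<and> d (x n) = n" if n: "n \<in> Nk k" for n
  proof -
    have "n \<le> d (z (J n))" using J1 n inv by simp
    then show "x n \<in> L \<and> d (x n) = n" using fac_props(1,4)[of "z (J n)" n] inv n x_def by simp
  qed
  have B: "fac1 (x p) n = x n" if n: "n \<in> Nk k" and p: "p \<in> Nk k" and np: "n \<le> p" for n p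
  proof -
    have pd: "p \<le> d (z (J p))" using J1 p inv by simp
    have "fac1 (fac1 (z (J p)) p) n = fac1 (z (J p)) n" using fac1_fac1 inv np pd by blast
    also have "\<dots> = fac1 (fac1 (z (J p)) (dg (J n))) n"
      using fac1_fac1[of "z (J p)" n "dg (J n)"] inv J1[OF n] dg_mono[OF J2[OF np]] by simp
    also have "\<dots> = fac1 (z (J n)) n" using pre J2[OF np] by simp
    finally show "fac1 (x p) n = x n" using n p x_def by simp
  qed
  have "IP x" unfolding IP_def using A B x_def by auto
  moreover have "x 0 = v" using x_def Nk_0 fac_0(1)[OF vL] z0 rv
    by (simp add: J_def)
  ultimately show ?thesis by blast
qed

end



definition Phi0 :: "('g list \<Rightarrow> 'e \<Rightarrow> 'e option) \<Rightarrow> 'e \<Rightarrow> 'e \<Rightarrow> ('g list \<Rightarrow> 'r::comm_ring_1) \<Rightarrow> 'r" where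
  "Phi0 act e e' f = (\<Sum>w \<in> {w. f w \<noteq> 0 \<and> act w e = Some e'}. f w)"

lemma Phi0_sup:
  assumes "finite W" "{w. f w \<noteq> 0} \<subseteq> W"
  shows "Phi0 act e e' f = (\<Sum>w\<in>W. if act w e = Some e' then f w else 0)"
proof -
  have "Phi0 act e e' f = (\<Sum>w \<in> {w\<in>W. f w \<noteq> 0 \<and> act w e = Some e'}. f w)"
    unfolding Phi0_def using assms(2) by (intro sum.cong) auto
  also have "\<dots> = (\<Sum>w\<in>W. if f w \<noteq> 0 \<and> act w e = Some e' then f w else 0)"
    using assms(1) by (rule sum.inter_filter)
  also have "\<dots> = (\<Sum>w\<in>W. if act w e = Some e' then f w else 0)"
    by (intro sum.cong) auto
  finally show ?thesis .
qed

lemma fin_supp_sup: "fin_supp f \<Longrightarrow> finite {w. f w \<noteq> 0}" by (simp add: fin_supp_def)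

lemma Phi0_lin:
  fixes c :: "'i \<Rightarrow> 'r::comm_ring_1"
  assumes V: "finite V"
  shows "fin_supp (\<lambda>w. \<Sum>l\<in>V. c l * wmono (f l) w)"
    "Phi0 act e e' (\<lambda>w. \<Sum>l\<in>V. c l * wmono (f l) w) = (\<Sum>l\<in>V. if act (f l) e = Some e' then c l else 0)"
proof -
  let ?F = "\<lambda>w. \<Sum>l\<in>V. c l * wmono (f l) w"
  have sub: "{w. ?F w \<noteq> 0} \<subseteq> f ` V"
  proof
    fix w assume "w \<in> {w. ?F w \<noteq> 0}"
    then obtain l where "l \<in> V" "c l * wmono (f l) w \<noteq> (0::'r)"
      by (metis (mono_tags, lifting) mem_Collect_eq sum.neutral)
    then show "w \<in> f ` V" by (auto simp: wmono_def split: if_splits)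
  qed
  show "fin_supp ?F" unfolding fin_supp_def using finite_subset[OF sub] V by blast
  have "Phi0 act e e' ?F = (\<Sum>w\<in>f ` V. if act w e = Some e' then ?F w else 0)"
    by (rule Phi0_sup[OF finite_imageI[OF V] sub])
  also have "\<dots> = (\<Sum>w\<in>f ` V. \<Sum>l\<in>V. if act w e = Some e' \<and> w = f l then c l else 0)"
    by (intro sum.cong) (auto simp: wmono_def intro!: sum.cong)
  also have "\<dots> = (\<Sum>l\<in>V. \<Sum>w\<in>f ` V. if act w e = Some e' \<and> w = f l then c l else 0)"
    by (rule sum.swap)
  also have "\<dots> = (\<Sum>l\<in>V. if act (f l) e = Some e' then c l else 0)"
  proof (intro sum.cong refl)
    fix l assume l: "l \<in> V"
    have "(\<Sum>w\<in>f ` V. if act w e = Some e' \<and> w = f l then c l else 0)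
        = (\<Sum>w\<in>f ` V. if w = f l then (if act (f l) e = Some e' then c l else 0) else 0)"
      by (intro sum.cong) auto
    also have "\<dots> = (if act (f l) e = Some e' then c l else 0)"
      using V l by (simp add: sum.delta)
    finally show "(\<Sum>w\<in>f ` V. if act w e = Some e' \<and> w = f l then c l else 0) = (if act (f l) e = Some e' then c l else 0)" .
  qed
  finally show "Phi0 act e e' ?F = (\<Sum>l\<in>V. if act (f l) e = Some e' then c l else 0)" .
qed

lemma wmono_supp: "{w. (wmono u w :: 'r::comm_ring_1) \<noteq> 0} \<subseteq> {u}" by (auto simp: wmono_def)

lemma Phi0_wmono: "fin_supp (wmono u :: _ \<Rightarrow> 'r::comm_ring_1)"
  "Phi0 act e e' (wmono u :: _ \<Rightarrow> 'r::comm_ring_1) = (if act u e = Some e' then 1 else 0)"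
proof -
  show "fin_supp (wmono u :: _ \<Rightarrow> 'r::comm_ring_1)" unfolding fin_supp_def
    using finite_subset[OF wmono_supp] by blast
  show "Phi0 act e e' (wmono u :: _ \<Rightarrow> 'r::comm_ring_1) = (if act u e = Some e' then 1 else 0)"
  proof -
    have "Phi0 act e e' (wmono u :: _ \<Rightarrow> 'r) = (\<Sum>w\<in>{u}. if act w e = Some e' then wmono u w else 0)"
      by (rule Phi0_sup) (auto simp: wmono_def)
    then show ?thesis by (simp add: wmono_def)
  qed
qed

lemma Phi0_zero: "fin_supp (\<lambda>_. 0 :: 'r::comm_ring_1)" "Phi0 act e e' (\<lambda>_. 0 :: 'r::comm_ring_1) = 0"
  by (auto simp: fin_supp_def Phi0_def)

lemma Phi0_add:
  fixes f g :: "_ \<Rightarrow> 'r::comm_ring_1"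
  assumes "fin_supp f" "fin_supp g"
  shows "fin_supp (\<lambda>w. f w + g w)" "Phi0 act e e' (\<lambda>w. f w + g w) = Phi0 act e e' f + Phi0 act e e' g"
proof -
  let ?W = "{w. f w \<noteq> 0} \<union> {w. g w \<noteq> 0}"
  have W: "finite ?W" using assms by (simp add: fin_supp_def)
  have s: "{w. f w + g w \<noteq> 0} \<subseteq> ?W" by auto
  show "fin_supp (\<lambda>w. f w + g w)" unfolding fin_supp_def using finite_subset[OF s W] .
  show "Phi0 act e e' (\<lambda>w. f w + g w) = Phi0 act e e' f + Phi0 act e e' g"
  proof -
    have "Phi0 act e e' (\<lambda>w. f w + g w) = (\<Sum>w\<in>?W. (if act w e = Some e' then f w else 0) + (if act w e = Some e' then g w else 0))"
      unfolding Phi0_sup[OF W s, where act=act and e=e and e'=e'] by (intro sum.cong) auto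
    also have "\<dots> = Phi0 act e e' f + Phi0 act e e' g"
      using Phi0_sup[OF W, of f, where act=act and e=e and e'=e'] Phi0_sup[OF W, of g, where act=act and e=e and e'=e'] by (simp add: sum.distrib)
    finally show ?thesis .
  qed
qed

lemma Phi0_fsub:
  fixes f g :: "_ \<Rightarrow> 'r::comm_ring_1"
  assumes "fin_supp f" "fin_supp g"
  shows "fin_supp (fsub f g)" "Phi0 act e e' (fsub f g) = Phi0 act e e' f - Phi0 act e e' g"
proof -
  let ?W = "{w. f w \<noteq> 0} \<union> {w. g w \<noteq> 0}"
  have W: "finite ?W" using assms by (simp add: fin_supp_def)
  have s: "{w. fsub f g w \<noteq> 0} \<subseteq> ?W" by (auto simp: fsub_def)
  show "fin_supp (fsub f g)" unfolding fin_supp_def using finite_subset[OF s W] .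
  show "Phi0 act e e' (fsub f g) = Phi0 act e e' f - Phi0 act e e' g"
  proof -
    have "Phi0 act e e' (fsub f g) = (\<Sum>w\<in>?W. (if act w e = Some e' then f w else 0) - (if act w e = Some e' then g w else 0))"
      unfolding Phi0_sup[OF W s, where act=act and e=e and e'=e'] by (intro sum.cong) (auto simp: fsub_def)
    also have "\<dots> = Phi0 act e e' f - Phi0 act e e' g"
      using Phi0_sup[OF W, of f, where act=act and e=e and e'=e'] Phi0_sup[OF W, of g, where act=act and e=e and e'=e'] by (simp add: sum_subtractf)
    finally show ?thesis .
  qed
qed

lemma fmul_expand:
  fixes a x :: "'g list \<Rightarrow> 'r::comm_ring_1"
  assumes A: "finite A" "{u. a u \<noteq> 0} \<subseteq> A" and B: "finite B" "{v. x v \<noteq> 0} \<subseteq> B"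
  shows "fmul a x w = (\<Sum>p\<in>A \<times> B. if fst p @ snd p = w then a (fst p) * x (snd p) else 0)"
proof -
  let ?h = "\<lambda>i. (take i w, drop i w)"
  let ?P = "{p. fst p @ snd p = w}"
  let ?g = "\<lambda>p. a (fst p) * x (snd p)"
  have inj: "inj_on ?h {..length w}"
  proof (rule inj_onI)
    fix i j assume "i \<in> {..length w}" "j \<in> {..length w}" "?h i = ?h j"
    then show "i = j" proof -
      have "length (take i w) = length (take j w)" using \<open>?h i = ?h j\<close> by simp
      then show ?thesis using \<open>i \<in> {..length w}\<close> \<open>j \<in> {..length w}\<close> by simp
    qed
  qed
  have img: "?h ` {..length w} = ?P"
  proof
    show "?h ` {..length w} \<subseteq> ?P" by auto
    show "?P \<subseteq> ?h ` {..length w}"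
    proof
      fix p assume "p \<in> ?P"
      then have "p = ?h (length (fst p))" "length (fst p) \<in> {..length w}" by auto
      then show "p \<in> ?h ` {..length w}" by blast
    qed
  qed
  have finP: "finite ?P" using img by (metis finite_atMost finite_imageI)
  have "fmul a x w = (\<Sum>i\<in>{..length w}. ?g (?h i))" unfolding fmul_def by simp
  also have "\<dots> = (\<Sum>p\<in>?P. ?g p)" using sum.reindex[OF inj, of ?g] img by simp
  also have "\<dots> = (\<Sum>p\<in>?P \<inter> (A \<times> B). ?g p)"
  proof (rule sum.mono_neutral_right[OF finP])
    show "?P \<inter> (A \<times> B) \<subseteq> ?P" by blast
    show "\<forall>p\<in>?P - ?P \<inter> (A \<times> B). ?g p = 0" using A B by auto
  qed
  also have "\<dots> = (\<Sum>p\<in>{p \<in> A \<times> B. fst p @ snd p = w}. ?g p)" by (intro sum.cong) auto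
  also have "\<dots> = (\<Sum>p\<in>A \<times> B. if fst p @ snd p = w then ?g p else 0)"
    using A B by (intro sum.inter_filter) auto
  finally show ?thesis .
qed

lemma Phi0_fmul:
  fixes a x :: "'g list \<Rightarrow> 'r::comm_ring_1"
  assumes app: "\<And>u v e. act (u @ v) e = Option.bind (act v e) (act u)"
    and fa: "fin_supp a" and fx: "fin_supp x"
  shows "fin_supp (fmul a x)"
    "\<exists>F. finite F \<and> (\<forall>e''\<in>F. \<exists>v. act v e = Some e'') \<and>
       Phi0 act e e' (fmul a x) = (\<Sum>e''\<in>F. Phi0 act e e'' x * Phi0 act e'' e' a)"
proof -
  define A where "A = {u. a u \<noteq> 0}"
  define B where "B = {v. x v \<noteq> 0}"
  have A: "finite A" "{u. a u \<noteq> 0} \<subseteq> A" using fa by (auto simp: A_def fin_supp_def)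
  have B: "finite B" "{v. x v \<noteq> 0} \<subseteq> B" using fx by (auto simp: B_def fin_supp_def)
  let ?g = "\<lambda>p. a (fst p) * x (snd p)"
  define W where "W = (\<lambda>p. fst p @ snd p) ` (A \<times> B)"
  have W: "finite W" using A B by (simp add: W_def)
  note E = fmul_expand[OF A B]
  have sub: "{w. fmul a x w \<noteq> 0} \<subseteq> W"
  proof
    fix w assume "w \<in> {w. fmul a x w \<noteq> 0}"
    then have "(\<Sum>p\<in>A \<times> B. if fst p @ snd p = w then ?g p else 0) \<noteq> 0" using E by simp
    then obtain p where "p \<in> A \<times> B" "(if fst p @ snd p = w then ?g p else 0) \<noteq> 0"
      by (rule sum.not_neutral_contains_not_neutral)
    then show "w \<in> W" unfolding W_def by (auto split: if_splits)
  qed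
  show "fin_supp (fmul a x)" unfolding fin_supp_def using finite_subset[OF sub W] .
  define F where "F = (\<lambda>v. the (act v e)) ` {v\<in>B. act v e \<noteq> None}"
  have F: "finite F" using B by (simp add: F_def)
  have Fr: "\<forall>e''\<in>F. \<exists>v. act v e = Some e''" unfolding F_def by auto
  have "Phi0 act e e' (fmul a x) = (\<Sum>w\<in>W. if act w e = Some e' then fmul a x w else 0)"
    by (rule Phi0_sup[OF W sub])
  also have "\<dots> = (\<Sum>w\<in>W. \<Sum>p\<in>A \<times> B. if act w e = Some e' \<and> fst p @ snd p = w then ?g p else 0)"
    unfolding E by (intro sum.cong) auto
  also have "\<dots> = (\<Sum>p\<in>A \<times> B. \<Sum>w\<in>W. if act w e = Some e' \<and> fst p @ snd p = w then ?g p else 0)"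
    by (rule sum.swap)
  also have "\<dots> = (\<Sum>p\<in>A \<times> B. if act (fst p @ snd p) e = Some e' then ?g p else 0)"
  proof (intro sum.cong refl)
    fix p assume p: "p \<in> A \<times> B"
    have "(\<Sum>w\<in>W. if act w e = Some e' \<and> fst p @ snd p = w then ?g p else 0)
       = (\<Sum>w\<in>W. if fst p @ snd p = w then (if act (fst p @ snd p) e = Some e' then ?g p else 0) else 0)"
      by (intro sum.cong) auto
    also have "\<dots> = (if act (fst p @ snd p) e = Some e' then ?g p else 0)"
      using W p by (simp add: sum.delta W_def)
    finally show "(\<Sum>w\<in>W. if act w e = Some e' \<and> fst p @ snd p = w then ?g p else 0) = (if act (fst p @ snd p) e = Some e' then ?g p else 0)" .
  qed
  also have "\<dots> = (\<Sum>p\<in>A \<times> B. \<Sum>e''\<in>F. (if act (snd p) e = Some e'' then x (snd p) else 0) * (if act (fst p) e'' = Some e' then a (fst p) else 0))"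
  proof (intro sum.cong refl)
    fix p assume p: "p \<in> A \<times> B"
    obtain u v where uv: "p = (u, v)" by force
    have vB: "v \<in> B" using p uv by auto
    have claim: "(if act (u @ v) e = Some e' then a u * x v else 0) = (\<Sum>e''\<in>F. (if act v e = Some e'' then x v else 0) * (if act u e'' = Some e' then a u else 0))"
    proof (cases "act v e")
      case None
      then show ?thesis using app by simp
    next
      case (Some e0)
      have e0F: "e0 \<in> F" unfolding F_def using vB Some by force
      have "(\<Sum>e''\<in>F. (if act v e = Some e'' then x v else 0) * (if act u e'' = Some e' then a u else 0))
          = (\<Sum>e''\<in>F. if e'' = e0 then x v * (if act u e0 = Some e' then a u else 0) else 0)"
        using Some by (intro sum.cong) auto
      also have "\<dots> = x v * (if act u e0 = Some e' then a u else 0)" using F e0F by (simp add: sum.delta)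
      finally show ?thesis using app Some by (simp add: mult.commute)
    qed
    show "(if act (fst p @ snd p) e = Some e' then ?g p else 0) = (\<Sum>e''\<in>F. (if act (snd p) e = Some e'' then x (snd p) else 0) * (if act (fst p) e'' = Some e' then a (fst p) else 0))"
      unfolding uv fst_conv snd_conv by (rule claim)
  qed
  also have "\<dots> = (\<Sum>e''\<in>F. \<Sum>p\<in>A \<times> B. (if act (snd p) e = Some e'' then x (snd p) else 0) * (if act (fst p) e'' = Some e' then a (fst p) else 0))"
    by (rule sum.swap)
  also have "\<dots> = (\<Sum>e''\<in>F. (\<Sum>v\<in>B. if act v e = Some e'' then x v else 0) * (\<Sum>u\<in>A. if act u e'' = Some e' then a u else 0))"
  proof (intro sum.cong refl)
    fix e'' assume "e'' \<in> F"
    show "(\<Sum>p\<in>A \<times> B. (if act (snd p) e = Some e'' then x (snd p) else 0) * (if act (fst p) e'' = Some e' then a (fst p) else 0))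
       = (\<Sum>v\<in>B. if act v e = Some e'' then x v else 0) * (\<Sum>u\<in>A. if act u e'' = Some e' then a u else 0)"
    proof -
      let ?X = "\<lambda>v. if act v e = Some e'' then x v else 0"
      let ?Y = "\<lambda>u. if act u e'' = Some e' then a u else 0"
      have "(\<Sum>p\<in>A \<times> B. ?X (snd p) * ?Y (fst p)) = (\<Sum>u\<in>A. \<Sum>v\<in>B. ?X v * ?Y u)"
        using sum.cartesian_product[of "\<lambda>u v. ?X v * ?Y u" B A] by (simp add: split_def)
      also have "\<dots> = (\<Sum>v\<in>B. \<Sum>u\<in>A. ?X v * ?Y u)" by (rule sum.swap)
      also have "\<dots> = (\<Sum>v\<in>B. ?X v) * (\<Sum>u\<in>A. ?Y u)" by (simp add: sum_product)
      finally show ?thesis .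
    qed
  qed
  also have "\<dots> = (\<Sum>e''\<in>F. Phi0 act e e'' x * Phi0 act e'' e' a)"
    using Phi0_sup[OF A(1) A(2), where act=act] Phi0_sup[OF B(1) B(2), where act=act] by simp
  finally show "\<exists>F. finite F \<and> (\<forall>e''\<in>F. \<exists>v. act v e = Some e'') \<and>
       Phi0 act e e' (fmul a x) = (\<Sum>e''\<in>F. Phi0 act e e'' x * Phi0 act e'' e' a)"
    using F Fr by blast
qed



context kg begin

definition ideg :: "'p \<Rightarrow> nat \<Rightarrow> int" where "ideg l = (\<lambda>i. int (d l i))"

definition act_gen :: "'p kpgen \<Rightarrow> ((nat \<Rightarrow> nat) \<Rightarrow> 'p) \<times> (nat \<Rightarrow> int) \<Rightarrow> (((nat \<Rightarrow> nat) \<Rightarrow> 'p) \<times> (nat \<Rightarrow> int)) option" where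
  "act_gen g e = (case g of
     Pg v \<Rightarrow> if v \<in> vertices L d \<and> fst e 0 = v then Some e else None
   | Sg l \<Rightarrow> if l \<in> L \<and> d l \<noteq> (\<lambda>_. 0) \<and> s l = fst e 0 then Some (cat l (fst e), snd e + ideg l) else None
   | Sstg l \<Rightarrow> if l \<in> L \<and> d l \<noteq> (\<lambda>_. 0) \<and> fst e (d l) = l then Some (shift (d l) (fst e), snd e - ideg l) else None)"

primrec act :: "'p kpgen list \<Rightarrow> ((nat \<Rightarrow> nat) \<Rightarrow> 'p) \<times> (nat \<Rightarrow> int) \<Rightarrow> (((nat \<Rightarrow> nat) \<Rightarrow> 'p) \<times> (nat \<Rightarrow> int)) option" where
  "act [] e = Some e"
| "act (g # w) e = Option.bind (act w e) (act_gen g)"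

lemma act_append: "act (u @ v) e = Option.bind (act v e) (act u)"
  by (induction u) (auto split: option.splits)

lemma act_gen_valid: "IP (fst e) \<Longrightarrow> act_gen g e = Some e' \<Longrightarrow> IP (fst e')"
  by (cases g) (auto simp: act_gen_def IP_cat IP_shift dNk split: if_splits)

lemma act_valid: "IP (fst e) \<Longrightarrow> act w e = Some e' \<Longrightarrow> IP (fst e')"
proof (induction w arbitrary: e')
  case Nil then show ?case by simp
next
  case (Cons g w)
  then obtain e0 where "act w e = Some e0" "act_gen g e0 = Some e'" by (auto split: Option.bind_splits)
  then show ?case using Cons act_gen_valid by blast
qed

lemma ideg_cmp: "l \<in> L \<Longrightarrow> m \<in> L \<Longrightarrow> s l = r m \<Longrightarrow> ideg (cmp l m) = ideg l + ideg m"
  using d_cmp by (auto simp: ideg_def fun_eq_iff)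

lemma vert_iff: "v \<in> vertices L d \<longleftrightarrow> v \<in> L \<and> d v = 0"
  by (simp add: vertices_def zero_fun_def)

lemma nz_iff: "(f::nat\<Rightarrow>nat) \<noteq> (\<lambda>_. 0) \<longleftrightarrow> f \<noteq> 0" by (simp add: zero_fun_def)

lemma H1:
  assumes "act u e = act v e"
  shows "fin_supp (fsub (wmono u) (wmono v) :: _ \<Rightarrow> 'r::comm_ring_1) \<and> Phi0 act e e' (fsub (wmono u) (wmono v) :: _ \<Rightarrow> 'r) = 0"
  using assms by (simp add: Phi0_fsub Phi0_wmono)

lemma H2:
  assumes "act u e = None"
  shows "fin_supp (fsub (wmono u) (\<lambda>_. 0) :: _ \<Rightarrow> 'r::comm_ring_1) \<and> Phi0 act e e' (fsub (wmono u) (\<lambda>_. 0) :: _ \<Rightarrow> 'r) = 0"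
  using assms by (simp add: Phi0_fsub Phi0_wmono Phi0_zero)

lemma r_vert: "l \<in> L \<Longrightarrow> r l \<in> vertices L d" using rL dr vert_iff by blast
lemma s_vert: "l \<in> L \<Longrightarrow> s l \<in> vertices L d" using sL ds vert_iff by blast

lemma kp1: assumes "v \<in> vertices L d" "w \<in> vertices L d"
  shows "act [Pg v, Pg w] e = (if v = w then act [Pg v] e else None)"
  using assms by (auto simp: act_gen_def)

lemma kp2a: assumes x: "IP x" and l: "l \<in> L" and m: "m \<in> L" and dl: "d l \<noteq> (\<lambda>_. 0)" and dm: "d m \<noteq> (\<lambda>_. 0)" and lm: "s l = r m"
  shows "act [Sg l, Sg m] (x, g) = act [Sg (cmp l m)] (x, g)"
proof (cases "s m = x 0")
  case True
  have c0: "cat m x 0 = s l" using cat_0[OF x m True] lm by simp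
  have cL: "cmp l m \<in> L" using cmpL l m lm by auto
  have dc: "d (cmp l m) \<noteq> (\<lambda>_. 0)" using d_cmp[OF l m lm] dl by (auto simp: fun_eq_iff)
  have sc: "s (cmp l m) = x 0" using s_cmp[OF l m lm] True by simp
  have cc: "cat l (cat m x) = cat (cmp l m) x" using cat_cat[OF x m l True lm] .
  show ?thesis using True c0 cL dc sc cc l m dl dm ideg_cmp[OF l m lm]
    by (simp add: act_gen_def add.assoc add.commute[of "ideg m"])
next
  case False
  have "s (cmp l m) \<noteq> x 0" using s_cmp[OF l m lm] False by simp
  then show ?thesis using False by (simp add: act_gen_def)
qed

lemma kp2b: assumes x: "IP x" and l: "l \<in> L" and m: "m \<in> L" and dl: "d l \<noteq> (\<lambda>_. 0)" and dm: "d m \<noteq> (\<lambda>_. 0)" and lm: "s l = r m"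
  shows "act [Sstg m, Sstg l] (x, g) = act [Sstg (cmp l m)] (x, g)"
proof -
  have cL: "cmp l m \<in> L" using cmpL l m lm by auto
  have dc: "d (cmp l m) \<noteq> (\<lambda>_. 0)" using d_cmp[OF l m lm] dl by (auto simp: fun_eq_iff)
  have dcm: "d (cmp l m) = d l + d m" using d_cmp[OF l m lm] .
  have ss: "shift (d m) (shift (d l) x) = shift (d l + d m) x" using shift_shift[OF x dNk[OF m] dNk[OF l]] .
  note SE = star_equiv[OF x l m lm]
  show ?thesis using cL dc dcm ss SE l m dl dm ideg_cmp[OF l m lm]
    by (auto simp: act_gen_def diff_diff_eq)
qed

lemma kp2c: assumes x: "IP x" and l: "l \<in> L" and dl: "d l \<noteq> (\<lambda>_. 0)"
  shows "act [Pg (r l), Sg l] (x, g) = act [Sg l] (x, g)"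
  using cat_0[OF x l] r_vert[OF l] l dl by (auto simp: act_gen_def)

lemma kp2d: assumes x: "IP x" and l: "l \<in> L" and dl: "d l \<noteq> (\<lambda>_. 0)"
  shows "act [Sg l, Pg (s l)] (x, g) = act [Sg l] (x, g)"
  using s_vert[OF l] l dl by (auto simp: act_gen_def)

lemma kp2e: assumes x: "IP x" and l: "l \<in> L" and dl: "d l \<noteq> (\<lambda>_. 0)"
  shows "act [Pg (s l), Sstg l] (x, g) = act [Sstg l] (x, g)"
  using shift_0v[OF x dNk[OF l]] s_vert[OF l] l dl by (auto simp: act_gen_def)

lemma kp2f: assumes x: "IP x" and l: "l \<in> L" and dl: "d l \<noteq> (\<lambda>_. 0)"
  shows "act [Sstg l, Pg (r l)] (x, g) = act [Sstg l] (x, g)"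
  using IP_r[OF x dNk[OF l]] r_vert[OF l] l dl by (auto simp: act_gen_def)

lemma kp3: assumes x: "IP x" and l: "l \<in> L" and m: "m \<in> L" and dlm: "d l = d m" and dl: "d l \<noteq> (\<lambda>_. 0)"
  shows "act [Sstg l, Sg m] (x, g) = (if l = m then act [Pg (s l)] (x, g) else None)"
proof (cases "s m = x 0")
  case True
  have ct: "cat m x (d l) = m" using cat_top[OF x m True] dlm by simp
  have sc: "shift (d m) (cat m x) = x" using shift_cat[OF x m True] .
  show ?thesis using True ct sc dlm dl l m s_vert[OF m] by (auto simp: act_gen_def)
next
  case False
  then show ?thesis using s_vert[OF l] by (auto simp: act_gen_def)
qed

lemma kp4_term: assumes x: "IP x" and l: "l \<in> vpaths L r d v n" and n: "n \<noteq> (\<lambda>_. 0)"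
  shows "act [Sg l, Sstg l] (x, g) = (if x n = l then Some (x, g) else None)"
proof -
  have lL: "l \<in> L" and dl: "d l = n" and rl: "r l = v" using l by (auto simp: vpaths_def)
  have "x (d l) = l \<Longrightarrow> s l = shift (d l) x 0" using shift_0v[OF x dNk[OF lL]] by simp
  moreover have "x (d l) = l \<Longrightarrow> cat l (shift (d l) x) = x" using cat_shift[OF x lL] by simp
  ultimately show ?thesis using lL dl n by (auto simp: act_gen_def)
qed


lemma kp4:
  assumes rf: "row_finite k L r d" and x: "IP x" and v: "v \<in> vertices L d" and n: "n \<in> Nk k"
    and nz: "n \<noteq> (\<lambda>_. 0)"
  shows "fin_supp (fsub (wmono [Pg v]) (\<lambda>w. \<Sum>l\<in>vpaths L r d v n. wmono [Sg l, Sstg l] w) :: _ \<Rightarrow> 'r::comm_ring_1)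
    \<and> Phi0 act (x, g) e' (fsub (wmono [Pg v]) (\<lambda>w. \<Sum>l\<in>vpaths L r d v n. wmono [Sg l, Sstg l] w) :: _ \<Rightarrow> 'r) = 0"
proof -
  define V where "V = vpaths L r d v n"
  have fin: "finite V" using rf v n unfolding row_finite_def V_def by blast
  have eqS: "(\<lambda>w. \<Sum>l\<in>V. wmono [Sg l, Sstg l] w :: 'r) = (\<lambda>w. \<Sum>l\<in>V. (\<lambda>_. 1::'r) l * wmono ((\<lambda>l. [Sg l, Sstg l]) l) w)"
    by simp
  note LL = Phi0_lin[OF fin, where c="\<lambda>_. 1::'r" and f="\<lambda>l. [Sg l, Sstg l]"]
  have F1: "fin_supp (\<lambda>w. \<Sum>l\<in>V. wmono [Sg l, Sstg l] w :: 'r)" unfolding eqS by (rule LL(1))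
  have "Phi0 act (x, g) e' (\<lambda>w. \<Sum>l\<in>V. wmono [Sg l, Sstg l] w :: 'r)
      = (\<Sum>l\<in>V. if act [Sg l, Sstg l] (x, g) = Some e' then 1 else 0)"
    unfolding eqS by (rule LL(2))
  also have "\<dots> = (\<Sum>l\<in>V. if x n = l then (if (x, g) = e' then 1 else 0) else 0)"
    using kp4_term[OF x _ nz] unfolding V_def by (intro sum.cong) auto
  also have "\<dots> = (if x n \<in> V then (if (x, g) = e' then 1 else 0) else 0)"
    using fin by (simp add: sum.delta)
  also have "\<dots> = (if x 0 = v then (if (x, g) = e' then 1 else 0) else 0)"
  proof -
    have "x n \<in> V \<longleftrightarrow> x 0 = v" using IP_L[OF x n] IP_d[OF x n] IP_r[OF x n]
      unfolding V_def vpaths_def by auto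
    then show ?thesis by simp
  qed
  finally have P2: "Phi0 act (x, g) e' (\<lambda>w. \<Sum>l\<in>V. wmono [Sg l, Sstg l] w :: 'r) = (if x 0 = v then (if (x, g) = e' then 1 else 0) else 0)" .
  have P1: "Phi0 act (x, g) e' (wmono [Pg v] :: _ \<Rightarrow> 'r) = (if x 0 = v then (if (x, g) = e' then 1 else 0) else 0)"
    using v by (simp add: Phi0_wmono act_gen_def)
  show ?thesis using F1 P1 P2 unfolding V_def by (simp add: Phi0_fsub Phi0_wmono(1))
qed

lemma kp1_ok: assumes "v \<in> vertices L d" "w \<in> vertices L d"
  shows "fin_supp (fsub (wmono [Pg v, Pg w]) (if v = w then wmono [Pg v] else (\<lambda>_. 0)) :: _ \<Rightarrow> 'r::comm_ring_1)
     \<and> Phi0 act e e' (fsub (wmono [Pg v, Pg w]) (if v = w then wmono [Pg v] else (\<lambda>_. 0)) :: _ \<Rightarrow> 'r) = 0"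
proof (cases "v = w")
  case True then show ?thesis using H1[of "[Pg v, Pg w]" e "[Pg v]"] kp1[OF assms, of e] by simp
next
  case False then show ?thesis using H2[of "[Pg v, Pg w]" e] kp1[OF assms, of e] by simp
qed

lemma kp3_ok: assumes x: "IP x" and l: "l \<in> L" and m: "m \<in> L" and dlm: "d l = d m" and dl: "d l \<noteq> (\<lambda>_. 0)"
  shows "fin_supp (fsub (wmono [Sstg l, Sg m]) (if l = m then wmono [Pg (s l)] else (\<lambda>_. 0)) :: _ \<Rightarrow> 'r::comm_ring_1)
     \<and> Phi0 act (x, g) e' (fsub (wmono [Sstg l, Sg m]) (if l = m then wmono [Pg (s l)] else (\<lambda>_. 0)) :: _ \<Rightarrow> 'r) = 0"
proof (cases "l = m")
  case True then show ?thesis using H1[of "[Sstg l, Sg m]" "(x, g)" "[Pg (s l)]"] kp3[OF assms, of g] by simp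
next
  case False then show ?thesis using H2[of "[Sstg l, Sg m]" "(x, g)"] kp3[OF assms, of g] by simp
qed

lemma rel_ok:
  assumes rf: "row_finite k L r d" and x: "IP x" and rho: "\<rho> \<in> (kp_rels k L r s d cmp :: (_ \<Rightarrow> 'r::comm_ring_1) set)"
  shows "fin_supp \<rho> \<and> Phi0 act (x, g) e' \<rho> = 0"
  using rho unfolding kp_rels_def
  apply (elim UnE)
  subgoal by (elim CollectE exE conjE, hypsubst, rule kp1_ok, assumption+)
  subgoal by (elim CollectE exE conjE, hypsubst, rule H1, rule kp2a[OF x], assumption+)
  subgoal by (elim CollectE exE conjE, hypsubst, rule H1, rule kp2b[OF x], assumption+)
  subgoal by (elim CollectE exE conjE, hypsubst, rule H1, rule kp2c[OF x], assumption+)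
  subgoal by (elim CollectE exE conjE, hypsubst, rule H1, rule kp2d[OF x], assumption+)
  subgoal by (elim CollectE exE conjE, hypsubst, rule H1, rule kp2e[OF x], assumption+)
  subgoal by (elim CollectE exE conjE, hypsubst, rule H1, rule kp2f[OF x], assumption+)
  subgoal by (elim CollectE exE conjE, hypsubst, rule kp3_ok[OF x], assumption+)
  subgoal by (elim CollectE exE conjE, hypsubst, rule kp4[OF rf x], assumption+)
  done

lemma rel_fin:
  assumes rf: "row_finite k L r d" and rho: "\<rho> \<in> (kp_rels k L r s d cmp :: (_ \<Rightarrow> 'r::comm_ring_1) set)"
  shows "fin_supp \<rho>"
proof -
  have lin: "fin_supp (\<lambda>w. \<Sum>l\<in>vpaths L r d v n. wmono [Sg l, Sstg l] w :: 'r)"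
    if "v \<in> vertices L d" "n \<in> Nk k" for v n
  proof -
    have fin: "finite (vpaths L r d v n)" using rf that unfolding row_finite_def by blast
    have eqS: "(\<lambda>w. \<Sum>l\<in>vpaths L r d v n. wmono [Sg l, Sstg l] w :: 'r) = (\<lambda>w. \<Sum>l\<in>vpaths L r d v n. (\<lambda>_. 1::'r) l * wmono ((\<lambda>l. [Sg l, Sstg l]) l) w)"
      by simp
    show ?thesis unfolding eqS by (rule Phi0_lin(1)[OF fin])
  qed
  note W = Phi0_fsub(1) Phi0_wmono(1) Phi0_zero(1)
  show ?thesis using rho unfolding kp_rels_def
    apply (elim UnE)
    subgoal by (elim CollectE exE conjE, hypsubst, cases "fst x = snd x") (auto simp: W)
    subgoal by (elim CollectE exE conjE, hypsubst, simp add: W)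
    subgoal by (elim CollectE exE conjE, hypsubst, simp add: W)
    subgoal by (elim CollectE exE conjE, hypsubst, simp add: W)
    subgoal by (elim CollectE exE conjE, hypsubst, simp add: W)
    subgoal by (elim CollectE exE conjE, hypsubst, simp add: W)
    subgoal by (elim CollectE exE conjE, hypsubst, simp add: W)
    subgoal by (elim CollectE exE conjE, hypsubst) (simp add: W)
    subgoal by (elim CollectE exE conjE, hypsubst, rule Phi0_fsub(1)[OF Phi0_wmono(1) lin], assumption+)
    done
qed

lemma ideal_ok:
  assumes rf: "row_finite k L r d"
    and I: "z \<in> gen_ideal (kp_rels k L r s d cmp :: (_ \<Rightarrow> 'r::comm_ring_1) set)"
  shows "fin_supp z \<and> (\<forall>e e'. IP (fst e) \<longrightarrow> Phi0 act e e' z = 0)"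
  using I
proof (induction rule: gen_ideal.induct)
  case (gen x)
  have "Phi0 act e e' x = 0" if "IP (fst e)" for e e'
    using rel_ok[OF rf that gen, of "snd e" e'] by simp
  then show ?case using rel_fin[OF rf gen] by blast
next
  case zero
  then show ?case by (simp add: Phi0_zero)
next
  case (add x y)
  then show ?case by (simp add: Phi0_add)
next
  case (lmul a x)
  have fs: "fin_supp (fmul a x)" using Phi0_fmul(1)[OF act_append] lmul by blast
  have "Phi0 act e e' (fmul a x) = 0" if e: "IP (fst e)" for e e'
  proof -
    obtain F where F: "finite F" "Phi0 act e e' (fmul a x) = (\<Sum>e''\<in>F. Phi0 act e e'' x * Phi0 act e'' e' a)"
      using Phi0_fmul(2)[OF act_append lmul(1), of x e e'] lmul by blast
    then show ?thesis using lmul e by simp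
  qed
  then show ?case using fs by blast
next
  case (rmul a x)
  have fs: "fin_supp (fmul x a)" using Phi0_fmul(1)[OF act_append] rmul by blast
  have "Phi0 act e e' (fmul x a) = 0" if e: "IP (fst e)" for e e'
  proof -
    obtain F where F: "finite F" "\<forall>e''\<in>F. \<exists>v. act v e = Some e''"
       "Phi0 act e e' (fmul x a) = (\<Sum>e''\<in>F. Phi0 act e e'' a * Phi0 act e'' e' x)"
      using Phi0_fmul(2)[OF act_append _ rmul(1), of x e e'] rmul by blast
    have "\<forall>e''\<in>F. Phi0 act e'' e' x = 0" using F(2) act_valid[OF e] rmul by blast
    then show ?thesis using F(3) by simp
  qed
  then show ?case using fs by blast
qed

end


context kg begin

lemma zfun: "(\<lambda>_. 0::nat) = 0" by (simp add: zero_fun_def)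

lemma key_act:
  assumes y: "IP y" and a: "a \<in> L" and b: "b \<in> L" and b0: "b0 \<in> L"
    and sab: "s a = s b" and db: "d b = d b0" and sb0: "s b0 = y 0"
  shows "act [sgen d a, sgen_star d b] (cat b0 y, 0) = (if b = b0 then Some (cat a y, ideg a - ideg b0) else None)"
proof -
  define z where "z = cat b0 y"
  have z: "IP z" using IP_cat[OF y b0 sb0] z_def by simp
  have step1: "act_gen (sgen_star d b) (z, 0) = (if b = b0 then Some (y, - ideg b0) else None)"
  proof (cases "d b = (\<lambda>_. 0)")
    case True
    then have d0: "d b0 = 0" "d b = 0" using db zfun by auto
    have rb0: "r b0 = b0" using deg0[OF b0 d0(1)] by simp
    have z0: "z 0 = b0" using cat_0[OF y b0 sb0] rb0 z_def by simp
    have zy: "z = y"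
    proof -
      have "z = shift 0 z" using shift_zero[OF z] by simp
      also have "\<dots> = shift (d b0) z" using d0 by simp
      also have "\<dots> = y" using shift_cat[OF y b0 sb0] z_def by simp
      finally show ?thesis .
    qed
    have bv: "b \<in> vertices L d" using b d0 vert_iff by blast
    have i0: "ideg b0 = 0" using d0 by (simp add: ideg_def zero_fun_def)
    show ?thesis using True bv z0 zy i0 by (auto simp: sgen_star_def act_gen_def)
  next
    case False
    have zt: "z (d b) = b0" using cat_top[OF y b0 sb0] db z_def by simp
    have sh: "shift (d b0) z = y" using shift_cat[OF y b0 sb0] z_def by simp
    show ?thesis using False zt sh b db by (auto simp: sgen_star_def act_gen_def ideg_def)
  qed
  have step2: "act_gen (sgen d a) (y, - ideg b0) = Some (cat a y, ideg a - ideg b0)" if sa: "s a = y 0"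
  proof (cases "d a = (\<lambda>_. 0)")
    case True
    then have d0: "d a = 0" using zfun by auto
    have sa': "s a = a" using deg0[OF a d0] by simp
    have ca: "cat a y = y"
    proof -
      have "cat a y = shift 0 (cat a y)" using shift_zero[OF IP_cat[OF y a sa]] by simp
      also have "\<dots> = shift (d a) (cat a y)" using d0 by simp
      also have "\<dots> = y" using shift_cat[OF y a sa] by simp
      finally show ?thesis .
    qed
    have av: "a \<in> vertices L d" using a d0 vert_iff by blast
    have i0: "ideg a = 0" using d0 by (simp add: ideg_def zero_fun_def)
    show ?thesis using True av ca i0 sa sa' by (auto simp: sgen_def act_gen_def)
  next
    case False
    show ?thesis using False a sa by (auto simp: sgen_def act_gen_def)
  qed
  show ?thesis
  proof (cases "b = b0")
    case True
    then have "s a = y 0" using sab sb0 by simp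
    then show ?thesis using step1 step2 True z_def by simp
  next
    case False
    then show ?thesis using step1 z_def by simp
  qed
qed

lemma cat_inj:
  assumes y: "IP y" and a: "a \<in> L" and a0: "a0 \<in> L" and sa: "s a = y 0" and sa0: "s a0 = y 0"
    and eq: "(cat a y, ideg a - g) = (cat a0 y, ideg a0 - g)"
  shows "a = a0"
proof -
  have e1: "cat a y = cat a0 y" and e2: "ideg a - g = ideg a0 - g" using eq by auto
  from e2 have "ideg a = ideg a0" by simp
  then have da: "d a = d a0" by (auto simp: ideg_def fun_eq_iff)
  have "a = cat a y (d a)" using cat_top[OF y a sa] by simp
  also have "\<dots> = cat a0 y (d a0)" using e1 da by simp
  also have "\<dots> = a0" using cat_top[OF y a0 sa0] .
  finally show ?thesis .
qed

end



theorem lemma4p1: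
  fixes k :: nat and L :: "'p set" and r s :: "'p \<Rightarrow> 'p"
    and d :: "'p \<Rightarrow> nat \<Rightarrow> nat" and cmp :: "'p \<Rightarrow> 'p \<Rightarrow> 'p"
    and m :: "nat \<Rightarrow> nat" and c :: "'p \<times> 'p \<Rightarrow> 'r::comm_ring_1"
  assumes "is_kgraph k L r s d cmp"
    and "row_finite k L r d"
    and "no_sources k L r d"
    and "m \<in> Nk k"
    and "finite {x. c x \<noteq> 0}"
    and "{x. c x \<noteq> 0} \<subseteq> {(a, b). a \<in> L \<and> b \<in> L \<and> s a = s b \<and> d b = m}"
    and "(\<lambda>w. \<Sum>x\<in>{x. c x \<noteq> 0}. c x * wmono [sgen d (fst x), sgen_star d (snd x)] w)
           \<in> kp_ideal k L r s d cmp"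
  shows "\<forall>x. c x = 0"
proof (rule ccontr)
  interpret kg k L r s d cmp by (rule kg.intro) (rule assms(1))
  define S where "S = {x. c x \<noteq> 0}"
  have finS: "finite S" using assms(5) S_def by simp
  assume "\<not> (\<forall>x. c x = 0)"
  then obtain p0 where p0: "c p0 \<noteq> 0" by blast
  obtain a0 b0 where ab0: "p0 = (a0, b0)" by force
  have p0S: "p0 \<in> S" using p0 S_def by simp
  have a0: "a0 \<in> L" and b0: "b0 \<in> L" and sab0: "s a0 = s b0" and db0: "d b0 = m"
    using assms(6) p0S ab0 S_def by auto
  obtain y where y: "IP y" and y0: "y 0 = s b0" using exists_IP[OF assms(3) s_vert[OF b0]] by blast
  have sb0: "s b0 = y 0" using y0 by simp
  define e where "e = (cat b0 y, 0 :: nat \<Rightarrow> int)"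
  define e' where "e' = (cat a0 y, ideg a0 - ideg b0)"
  have ve: "IP (fst e)" using IP_cat[OF y b0 sb0] e_def by simp
  define f where "f = (\<lambda>x::'p \<times> 'p. [sgen d (fst x), sgen_star d (snd x)])"
  have "Phi0 act e e' (\<lambda>w. \<Sum>x\<in>S. c x * wmono (f x) w) = 0"
    using ideal_ok[OF assms(2) assms(7)[unfolded kp_ideal_def]] ve unfolding S_def f_def by blast
  moreover have "Phi0 act e e' (\<lambda>w. \<Sum>x\<in>S. c x * wmono (f x) w) = (\<Sum>x\<in>S. if act (f x) e = Some e' then c x else 0)"
    by (rule Phi0_lin(2)[OF finS])
  moreover have "(\<Sum>x\<in>S. if act (f x) e = Some e' then c x else 0) = (\<Sum>x\<in>S. if x = p0 then c x else 0)"
  proof (intro sum.cong refl)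
    fix x assume xS: "x \<in> S"
    obtain a b where ab: "x = (a, b)" by force
    have a: "a \<in> L" and b: "b \<in> L" and sab: "s a = s b" and db: "d b = m"
      using assms(6) xS ab S_def by auto
    have A: "act (f x) e = (if b = b0 then Some (cat a y, ideg a - ideg b0) else None)"
      using key_act[OF y a b b0 sab _ sb0] db db0 unfolding f_def e_def ab by simp
    have "act (f x) e = Some e' \<longleftrightarrow> x = p0"
    proof
      assume h: "act (f x) e = Some e'"
      then have bb: "b = b0" using A by (auto split: if_splits)
      then have "(cat a y, ideg a - ideg b0) = (cat a0 y, ideg a0 - ideg b0)" using h A e'_def by simp
      moreover have "s a = y 0" using sab bb sb0 by simp
      moreover have "s a0 = y 0" using sab0 sb0 by simp
      ultimately have "a = a0" using cat_inj[OF y a a0] by blast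
      then show "x = p0" using bb ab ab0 by simp
    next
      assume "x = p0"
      then show "act (f x) e = Some e'" using A ab ab0 e'_def by simp
    qed
    then show "(if act (f x) e = Some e' then c x else 0) = (if x = p0 then c x else 0)" by simp
  qed
  moreover have "(\<Sum>x\<in>S. if x = p0 then c x else 0) = c p0" using finS p0S by (simp add: sum.delta')
  ultimately show False using p0 by simp
qed



end
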